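(* Let $p$ be prime, $n\ge2$, and $G$ a profinite group. Then $$\bigcap_{s=1}^{n}T^{\bar{\mathbb{U}}_{n,s}}(G)=\bigcap_{s=1}^{n-1}T^{\mathbb{U}_{n-1,s}}(G).$$
   Context: For profinite groups $\mathbb{U}$ and $G$, $T^{\mathbb{U}}(G)$ denotes the intersection of the kernels of all continuous homomorphisms $G\to\mathbb{U}$. For a commutative ring $R$, $\mathbb{U}_s(R)$ is the group of unipotent upper-triangular $(s+1)\times(s+1)$ matrices over $R$. For $1\le s\le k$ put $\mathbb{U}_{k,s}=\mathbb{U}_s(\mathbb{Z}/p^{k-s+1})$, and let $\bar{\mathbb{U}}_{k,s}$ be the quotient of $\mathbb{U}_{k,s}$ by the central subgroup of order $p$ generated by $I+p^{k-s}E_{1,s+1}$. (E.g. $\mathbb{U}_{k,1}\cong\mathbb{Z}/p^k$, $\bar{\mathbb{U}}_{k,1}\cong\mathbb{Z}/p^{k-1}$, and $\mathbb{U}_{k,k}=\mathbb{U}_k(\mathbb{Z}/p)$.) *)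

theory Defs
  imports "HOL-Analysis.Analysis" "HOL-Algebra.Algebra"
begin

definition profinite_group :: "('a, 'b) monoid_scheme \<Rightarrow> 'a topology \<Rightarrow> bool" where
  "profinite_group G T \<longleftrightarrow>
     group G \<and> topspace T = carrier G \<and>
     continuous_map (prod_topology T T) T (\<lambda>(x, y). x \<otimes>\<^bsub>G\<^esub> y) \<and>
     continuous_map T T (\<lambda>x. inv\<^bsub>G\<^esub> x) \<and>
     compact_space T \<and> Hausdorff_space T \<and>
     (\<forall>x \<in> topspace T. connected_component_of_set T x = {x})"

definition T_of :: "('c, 'd) monoid_scheme \<Rightarrow> ('a, 'b) monoid_scheme \<Rightarrow> 'a topology \<Rightarrow> 'a set" where
  "T_of U G T = carrier G \<inter>
     \<Inter> {kernel G U h | h. h \<in> hom G U \<and> continuous_map T (discrete_topology (carrier U)) h}"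

text \<open>Matrices are functions nat \<Rightarrow> nat \<Rightarrow> int, indices in {1..s+1}, zero outside,
  entries reduced to {0..<m} (representing Z/m).\<close>

definition unitri_carrier :: "nat \<Rightarrow> int \<Rightarrow> (nat \<Rightarrow> nat \<Rightarrow> int) set" where
  "unitri_carrier s m = {A. (\<forall>i j. A i j \<noteq> 0 \<longrightarrow> i \<in> {1..s+1} \<and> j \<in> {1..s+1}) \<and>
       (\<forall>i \<in> {1..s+1}. A i i = 1 mod m) \<and>
       (\<forall>i j. j < i \<longrightarrow> A i j = 0) \<and>
       (\<forall>i j. A i j \<in> {0..<m})}"

definition mat_one :: "nat \<Rightarrow> int \<Rightarrow> nat \<Rightarrow> nat \<Rightarrow> int" where
  "mat_one s m i j = (if i = j \<and> i \<in> {1..s+1} then 1 mod m else 0)"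

definition mat_mult :: "nat \<Rightarrow> int \<Rightarrow> (nat \<Rightarrow> nat \<Rightarrow> int) \<Rightarrow> (nat \<Rightarrow> nat \<Rightarrow> int) \<Rightarrow> nat \<Rightarrow> nat \<Rightarrow> int" where
  "mat_mult s m A B i j =
     (if i \<in> {1..s+1} \<and> j \<in> {1..s+1} then (\<Sum>k\<in>{1..s+1}. A i k * B k j) mod m else 0)"

definition Unip :: "nat \<Rightarrow> int \<Rightarrow> (nat \<Rightarrow> nat \<Rightarrow> int) monoid" where
  "Unip s m = \<lparr>carrier = unitri_carrier s m, monoid.mult = mat_mult s m, one = mat_one s m\<rparr>"

definition Ukp :: "nat \<Rightarrow> nat \<Rightarrow> nat \<Rightarrow> (nat \<Rightarrow> nat \<Rightarrow> int) monoid" where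
  "Ukp p k s = Unip s (int p ^ (k - s + 1))"

text \<open>The central element I + p^(k-s) E_{1,s+1} of U_{k,s}.\<close>

definition central_elt :: "nat \<Rightarrow> nat \<Rightarrow> nat \<Rightarrow> nat \<Rightarrow> nat \<Rightarrow> int" where
  "central_elt p k s =
     (mat_one s (int p ^ (k - s + 1)))(1 := ((mat_one s (int p ^ (k - s + 1))) 1)(s + 1 := int p ^ (k - s)))"

definition Ubar :: "nat \<Rightarrow> nat \<Rightarrow> nat \<Rightarrow> (nat \<Rightarrow> nat \<Rightarrow> int) set monoid" where
  "Ubar p k s = Ukp p k s Mod generate (Ukp p k s) {central_elt p k s}"

end

theory Submission
  imports Defs
begin

lemma T_of_sub: "T_of U G T \<subseteq> carrier G"
  unfolding T_of_def by blast

lemma T_of_joint: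
  fixes U :: "('c, 'd) monoid_scheme" and F :: "(('e, 'f) monoid_scheme \<times> ('c \<Rightarrow> 'e)) set"
  assumes homs: "\<And>V f. (V, f) \<in> F \<Longrightarrow> f \<in> hom U V"
    and triv: "\<And>a. a \<in> carrier U \<Longrightarrow> (\<And>V f. (V, f) \<in> F \<Longrightarrow> f a = \<one>\<^bsub>V\<^esub>) \<Longrightarrow> a = \<one>\<^bsub>U\<^esub>"
  shows "carrier G \<inter> (\<Inter>(V, f)\<in>F. T_of V G T) \<subseteq> T_of U G T"
proof
  fix x assume x: "x \<in> carrier G \<inter> (\<Inter>(V, f)\<in>F. T_of V G T)"
  have "x \<in> kernel G U h" if h: "h \<in> hom G U" "continuous_map T (discrete_topology (carrier U)) h" for h
  proof -
    have hx: "h x \<in> carrier U" using h x by (auto simp: hom_def)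
    have "f (h x) = \<one>\<^bsub>V\<^esub>" if VF: "(V, f) \<in> F" for V f
    proof -
      have fh: "f \<in> hom U V" using homs VF .
      have "f \<circ> h \<in> hom G V" using fh h(1) by (auto simp: hom_def Pi_iff)
      moreover have "continuous_map T (discrete_topology (carrier V)) (f \<circ> h)"
        by (rule continuous_map_compose[OF h(2)]) (use fh in \<open>auto simp: hom_def\<close>)
      ultimately have "x \<in> kernel G V (f \<circ> h)" using x VF unfolding T_of_def by blast
      thus ?thesis by (simp add: kernel_def)
    qed
    hence "h x = \<one>\<^bsub>U\<^esub>" using triv[OF hx] by blast
    thus ?thesis using x by (simp add: kernel_def)
  qed
  thus "x \<in> T_of U G T" using x unfolding T_of_def by blast
qed

declare sum.cl_ivl_Suc[simp del]

lemma mod_sum_mult_left: "(\<Sum>k\<in>K. (f k mod (m::int)) * g k) mod m = (\<Sum>k\<in>K. f k * g k) mod m"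
proof -
  have "(\<Sum>k\<in>K. (f k mod m) * g k) mod m = (\<Sum>k\<in>K. ((f k mod m) * g k) mod m) mod m"
    by (simp add: mod_sum_eq)
  also have "\<dots> = (\<Sum>k\<in>K. (f k * g k) mod m) mod m" by (simp add: mod_mult_left_eq)
  also have "\<dots> = (\<Sum>k\<in>K. f k * g k) mod m" by (simp add: mod_sum_eq)
  finally show ?thesis .
qed

lemma mod_sum_mult_right: "(\<Sum>k\<in>K. g k * (f k mod (m::int))) mod m = (\<Sum>k\<in>K. g k * f k) mod m"
  using mod_sum_mult_left[of f m g K] by (simp add: mult.commute)

lemma mat_mult_in: "i \<in> {1..s+1} \<Longrightarrow> j \<in> {1..s+1} \<Longrightarrow>
  mat_mult s m A B i j = (\<Sum>k\<in>{1..s+1}. A i k * B k j) mod m"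
  by (simp add: mat_mult_def)

lemma mat_mult_out: "\<not> (i \<in> {1..s+1} \<and> j \<in> {1..s+1}) \<Longrightarrow> mat_mult s m A B i j = 0"
  unfolding mat_mult_def by (rule if_not_P)

lemma mat_mult_assoc:
  "mat_mult s m (mat_mult s m A B) C = mat_mult s m A (mat_mult s m B C)"
proof (intro ext)
  fix i j
  show "mat_mult s m (mat_mult s m A B) C i j = mat_mult s m A (mat_mult s m B C) i j"
  proof (cases "i \<in> {1..s+1} \<and> j \<in> {1..s+1}")
    case True
    have "mat_mult s m (mat_mult s m A B) C i j
        = (\<Sum>k\<in>{1..s+1}. mat_mult s m A B i k * C k j) mod m"
      using True by (intro mat_mult_in) auto
    also have "\<dots> = (\<Sum>k\<in>{1..s+1}. ((\<Sum>l\<in>{1..s+1}. A i l * B l k) mod m) * C k j) mod m"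
      by (intro arg_cong[where f="\<lambda>x. x mod m"] sum.cong refl) (use True in \<open>simp add: mat_mult_in\<close>)
    also have "\<dots> = (\<Sum>k\<in>{1..s+1}. (\<Sum>l\<in>{1..s+1}. A i l * B l k) * C k j) mod m"
      by (rule mod_sum_mult_left)
    also have "\<dots> = (\<Sum>k\<in>{1..s+1}. \<Sum>l\<in>{1..s+1}. A i l * B l k * C k j) mod m"
      by (simp add: sum_distrib_right)
    also have "\<dots> = (\<Sum>l\<in>{1..s+1}. \<Sum>k\<in>{1..s+1}. A i l * (B l k * C k j)) mod m"
      by (subst sum.swap) (simp add: mult.assoc)
    also have "\<dots> = (\<Sum>l\<in>{1..s+1}. A i l * (\<Sum>k\<in>{1..s+1}. B l k * C k j)) mod m"
      by (simp add: sum_distrib_left)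
    also have "\<dots> = (\<Sum>l\<in>{1..s+1}. A i l * ((\<Sum>k\<in>{1..s+1}. B l k * C k j) mod m)) mod m"
      by (rule mod_sum_mult_right[symmetric])
    also have "\<dots> = (\<Sum>l\<in>{1..s+1}. A i l * mat_mult s m B C l j) mod m"
      by (intro arg_cong[where f="\<lambda>x. x mod m"] sum.cong refl) (use True in \<open>simp add: mat_mult_in\<close>)
    also have "\<dots> = mat_mult s m A (mat_mult s m B C) i j"
      using True by (intro mat_mult_in[symmetric]) auto
    finally show ?thesis .
  qed (simp add: mat_mult_out)
qed

lemma unitri_carrierD:
  assumes "A \<in> unitri_carrier s m"
  shows "\<And>i j. \<not> (i \<in> {1..s+1} \<and> j \<in> {1..s+1}) \<Longrightarrow> A i j = 0"
    and "\<And>i. i \<in> {1..s+1} \<Longrightarrow> A i i = 1 mod m"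
    and "\<And>i j. j < i \<Longrightarrow> A i j = 0"
    and "\<And>i j. 0 \<le> A i j" and "\<And>i j. A i j < m"
  using assms unfolding unitri_carrier_def by auto

lemma mat_one_eq: "2 \<le> m \<Longrightarrow> mat_one s m i j = (if i = j \<and> i \<in> {1..s+1} then 1 else 0)"
  by (simp add: mat_one_def)

lemma mat_one_carrier: "2 \<le> m \<Longrightarrow> mat_one s m \<in> unitri_carrier s m"
  by (auto simp: unitri_carrier_def mat_one_eq)

lemma mat_mult_one_left:
  assumes m: "2 \<le> m" and A: "A \<in> unitri_carrier s m"
  shows "mat_mult s m (mat_one s m) A = A"
proof (intro ext)
  fix i j
  show "mat_mult s m (mat_one s m) A i j = A i j"
  proof (cases "i \<in> {1..s+1} \<and> j \<in> {1..s+1}")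
    case True
    have "(\<Sum>k\<in>{1..s+1}. mat_one s m i k * A k j) = (\<Sum>k\<in>{1..s+1}. if k = i then A k j else 0)"
      by (rule sum.cong) (use True m in \<open>auto simp: mat_one_eq\<close>)
    also have "\<dots> = A i j" using True by simp
    finally have "mat_mult s m (mat_one s m) A i j = A i j mod m"
      using True by (simp add: mat_mult_in)
    also have "\<dots> = A i j" using unitri_carrierD(4,5)[OF A] by simp
    finally show ?thesis .
  qed (use unitri_carrierD(1)[OF A] in \<open>auto simp: mat_mult_def\<close>)
qed

lemma mat_mult_one_right:
  assumes m: "2 \<le> m" and A: "A \<in> unitri_carrier s m"
  shows "mat_mult s m A (mat_one s m) = A"
proof (intro ext)
  fix i j
  show "mat_mult s m A (mat_one s m) i j = A i j"
  proof (cases "i \<in> {1..s+1} \<and> j \<in> {1..s+1}")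
    case True
    have "(\<Sum>k\<in>{1..s+1}. A i k * mat_one s m k j) = (\<Sum>k\<in>{1..s+1}. if k = j then A i k else 0)"
      by (rule sum.cong) (use True m in \<open>auto simp: mat_one_eq\<close>)
    also have "\<dots> = A i j" using True by simp
    finally have "mat_mult s m A (mat_one s m) i j = A i j mod m"
      using True by (simp add: mat_mult_in)
    also have "\<dots> = A i j" using unitri_carrierD(4,5)[OF A] by simp
    finally show ?thesis .
  qed (use unitri_carrierD(1)[OF A] in \<open>auto simp: mat_mult_def\<close>)
qed

lemma mat_mult_closed:
  assumes m: "2 \<le> m" and A: "A \<in> unitri_carrier s m" and B: "B \<in> unitri_carrier s m"
  shows "mat_mult s m A B \<in> unitri_carrier s m"
proof -
  have lower: "mat_mult s m A B i j = 0" if "j < i" for i j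
  proof -
    have "(\<Sum>k\<in>{1..s+1}. A i k * B k j) = 0"
    proof (rule sum.neutral, rule ballI)
      fix k show "A i k * B k j = 0"
      using unitri_carrierD(3)[OF A, of k i] unitri_carrierD(3)[OF B, of j k] that
      by (cases "k < i") auto
    qed
    thus ?thesis by (simp add: mat_mult_def)
  qed
  have diag: "mat_mult s m A B i i = 1 mod m" if i: "i \<in> {1..s+1}" for i
  proof -
    have "A i k * B k i = (if k = i then 1 else 0)" for k
      using unitri_carrierD(3)[OF A, of k i] unitri_carrierD(3)[OF B, of i k]
        unitri_carrierD(2)[OF A i] unitri_carrierD(2)[OF B i] m
      by (cases "k < i"; cases "k = i") auto
    hence "mat_mult s m A B i i = (\<Sum>k\<in>{1..s+1}. (if k = i then 1 else 0)) mod m"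
      using i by (simp add: mat_mult_in)
    also have "\<dots> = 1 mod m" using i by simp
    finally show ?thesis .
  qed
  show ?thesis unfolding unitri_carrier_def
    using lower diag m by (auto simp: mat_mult_def)
qed

lemma Unip_monoid: "2 \<le> m \<Longrightarrow> monoid (Unip s m)"
  by (unfold_locales) (auto simp: Unip_def mat_mult_closed mat_one_carrier mat_mult_assoc
      mat_mult_one_left mat_mult_one_right)

definition cenx :: "nat \<Rightarrow> int \<Rightarrow> int \<Rightarrow> nat \<Rightarrow> nat \<Rightarrow> int" where
  "cenx s m v = (mat_one s m)(1 := (mat_one s m 1)(s + 1 := v))"

definition shiftm :: "nat \<Rightarrow> int \<Rightarrow> int \<Rightarrow> (nat \<Rightarrow> nat \<Rightarrow> int) \<Rightarrow> nat \<Rightarrow> nat \<Rightarrow> int" where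
  "shiftm s m v y = y(1 := (y 1)(s + 1 := (y 1 (s+1) + v) mod m))"

lemma cenx_eq: "1 \<le> s \<Longrightarrow> 2 \<le> m \<Longrightarrow>
  cenx s m v i k = (if k = i \<and> i \<in> {1..s+1} then 1 else 0) + (if i = 1 \<and> k = s+1 then v else 0)"
  by (auto simp: cenx_def mat_one_eq)

lemma shiftm_eq: "1 \<le> s \<Longrightarrow> shiftm s m v y i j = (if i = 1 \<and> j = s+1 then (y i j + v) mod m else y i j)"
  by (auto simp: shiftm_def)

lemma cenx_carrier: "1 \<le> s \<Longrightarrow> 2 \<le> m \<Longrightarrow> 0 \<le> v \<Longrightarrow> v < m \<Longrightarrow> cenx s m v \<in> unitri_carrier s m"
  by (auto simp: unitri_carrier_def cenx_eq)

lemma cenx_zero: "1 \<le> s \<Longrightarrow> 2 \<le> m \<Longrightarrow> cenx s m 0 = mat_one s m"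
  by (auto simp: cenx_eq mat_one_eq intro!: ext)

lemma cenx_mult_left:
  assumes s: "1 \<le> s" and m: "2 \<le> m" and y: "y \<in> unitri_carrier s m"
  shows "mat_mult s m (cenx s m v) y = shiftm s m v y"
proof (intro ext)
  fix i j
  show "mat_mult s m (cenx s m v) y i j = shiftm s m v y i j"
  proof (cases "i \<in> {1..s+1} \<and> j \<in> {1..s+1}")
    case True
    have row: "y (s+1) j = (if j = s+1 then 1 else 0)"
      using unitri_carrierD(2)[OF y, of "s+1"] unitri_carrierD(3)[OF y, of j "s+1"] True m by auto
    have "(\<Sum>k\<in>{1..s+1}. cenx s m v i k * y k j)
        = (\<Sum>k\<in>{1..s+1}. (if k = i then y k j else 0)) + (\<Sum>k\<in>{1..s+1}. (if k = s+1 then (if i = 1 then v else 0) * y k j else 0))"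
      unfolding sum.distrib[symmetric]
      by (rule sum.cong) (use True s m in \<open>auto simp: cenx_eq\<close>)
    also have "\<dots> = y i j + (if i = 1 \<and> j = s+1 then v else 0)"
      using True row by simp
    finally have "mat_mult s m (cenx s m v) y i j = (y i j + (if i = 1 \<and> j = s+1 then v else 0)) mod m"
      using True by (simp add: mat_mult_in)
    thus ?thesis using unitri_carrierD(4,5)[OF y, of i j] s by (auto simp: shiftm_eq)
  qed (use unitri_carrierD(1)[OF y] s in \<open>auto simp: mat_mult_out shiftm_eq\<close>)
qed

lemma cenx_mult_right:
  assumes s: "1 \<le> s" and m: "2 \<le> m" and y: "y \<in> unitri_carrier s m"
  shows "mat_mult s m y (cenx s m v) = shiftm s m v y"
proof (intro ext)
  fix i j
  show "mat_mult s m y (cenx s m v) i j = shiftm s m v y i j"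
  proof (cases "i \<in> {1..s+1} \<and> j \<in> {1..s+1}")
    case True
    have col: "y i 1 = (if i = 1 then 1 else 0)"
      using unitri_carrierD(2)[OF y, of 1] unitri_carrierD(3)[OF y, of 1 i] True m by auto
    have "(\<Sum>k\<in>{1..s+1}. y i k * cenx s m v k j)
        = (\<Sum>k\<in>{1..s+1}. (if k = j then y i k else 0)) + (\<Sum>k\<in>{1..s+1}. (if k = 1 then y i k * (if j = s+1 then v else 0) else 0))"
      unfolding sum.distrib[symmetric]
      by (rule sum.cong) (use True s m in \<open>auto simp: cenx_eq\<close>)
    also have "\<dots> = y i j + (if i = 1 \<and> j = s+1 then v else 0)"
      using True col by simp
    finally have "mat_mult s m y (cenx s m v) i j = (y i j + (if i = 1 \<and> j = s+1 then v else 0)) mod m"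
      using True by (simp add: mat_mult_in)
    thus ?thesis using unitri_carrierD(4,5)[OF y, of i j] s by (auto simp: shiftm_eq)
  qed (use unitri_carrierD(1)[OF y] s in \<open>auto simp: mat_mult_out shiftm_eq\<close>)
qed

lemma cenx_mult_cenx:
  assumes s: "1 \<le> s" and m: "2 \<le> m" and "0 \<le> b" "b < m"
  shows "mat_mult s m (cenx s m a) (cenx s m b) = cenx s m ((a + b) mod m)"
  using assms by (auto simp: cenx_mult_left cenx_carrier shiftm_eq cenx_eq add.commute intro!: ext)

section \<open>The generated central subgroup\<close>

definition Cset :: "nat \<Rightarrow> int \<Rightarrow> int \<Rightarrow> (nat \<Rightarrow> nat \<Rightarrow> int) set" where
  "Cset s m P = {cenx s m ((int c * P) mod m) | c. True}"

lemma Cset_mult: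
  assumes s: "1 \<le> s" and m: "2 \<le> m"
  shows "mat_mult s m (cenx s m ((int a * P) mod m)) (cenx s m ((int b * P) mod m)) = cenx s m ((int (a+b) * P) mod m)"
proof -
  have "((int a * P) mod m + (int b * P) mod m) mod m = (int (a+b) * P) mod m"
    by (simp add: mod_add_eq distrib_right)
  thus ?thesis using m s by (simp add: cenx_mult_cenx)
qed

lemma Cset_carrier: "1 \<le> s \<Longrightarrow> 2 \<le> m \<Longrightarrow> Cset s m P \<subseteq> unitri_carrier s m"
  by (auto simp: Cset_def intro!: cenx_carrier)

lemma Cset_one: "1 \<le> s \<Longrightarrow> 2 \<le> m \<Longrightarrow> mat_one s m \<in> Cset s m P"
  unfolding Cset_def by (rule CollectI, rule exI[of _ 0]) (simp add: cenx_zero)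

lemma Cset_closed: "1 \<le> s \<Longrightarrow> 2 \<le> m \<Longrightarrow> x \<in> Cset s m P \<Longrightarrow> y \<in> Cset s m P \<Longrightarrow> mat_mult s m x y \<in> Cset s m P"
  unfolding Cset_def using Cset_mult by blast

lemma generate_Cset:
  assumes s: "1 \<le> s" and q: "2 \<le> q" and P: "1 \<le> P" and m: "m = q * P"
  shows "generate (Unip s m) {cenx s m P} = Cset s m P"
proof
  have m2: "2 \<le> m"
  proof -
    have "2 * 1 \<le> q * P" by (rule mult_mono) (use q P in auto)
    thus ?thesis using m by simp
  qed
  have Pm: "P mod m = P"
  proof -
    have "1 * P < q * P" by (rule mult_strict_right_mono) (use q P in auto)
    thus ?thesis using m P by (intro mod_pos_pos_trivial) auto
  qed
  have Plt: "P < m"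
  proof -
    have "1 * P < q * P" by (rule mult_strict_right_mono) (use q P in auto)
    thus ?thesis using m by simp
  qed
  have qn: "int (nat (q - 1)) = q - 1" using q by simp
  have mon: "monoid (Unip s m)" using m2 by (rule Unip_monoid)
  have cP: "cenx s m P = cenx s m ((int 1 * P) mod m)" using Pm by simp
  show "generate (Unip s m) {cenx s m P} \<subseteq> Cset s m P"
  proof
    fix x assume "x \<in> generate (Unip s m) {cenx s m P}"
    thus "x \<in> Cset s m P"
    proof (induction rule: generate.induct)
      case one thus ?case using Cset_one[OF s m2] by (simp add: Unip_def)
    next
      case (incl h) thus ?case using cP unfolding Cset_def by blast
    next
      case (inv h)
      define w where "w = cenx s m ((int (nat (q - 1)) * P) mod m)"
      have wc: "w \<in> carrier (Unip s m)" unfolding w_def Unip_def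
        using s m2 by (auto intro!: cenx_carrier)
      have hc: "h \<in> carrier (Unip s m)" using inv s m2 Plt P by (simp add: Unip_def cenx_carrier)
      have e1: "(int (1 + nat (q - 1)) * P) mod m = 0" using qn m by (simp add: algebra_simps)
      have e2: "(int (nat (q - 1) + 1) * P) mod m = 0" using qn m by (simp add: algebra_simps)
      have hP: "h = cenx s m ((int 1 * P) mod m)" using inv cP by simp
      have "h \<otimes>\<^bsub>Unip s m\<^esub> w = cenx s m ((int (1 + nat (q - 1)) * P) mod m)"
        unfolding hP w_def Unip_def using Cset_mult[OF s m2, of 1 P "nat (q - 1)"] by simp
      also have "\<dots> = \<one>\<^bsub>Unip s m\<^esub>" unfolding e1 by (simp add: Unip_def cenx_zero[OF s m2])
      finally have hw: "h \<otimes>\<^bsub>Unip s m\<^esub> w = \<one>\<^bsub>Unip s m\<^esub>" .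
      have "w \<otimes>\<^bsub>Unip s m\<^esub> h = cenx s m ((int (nat (q - 1) + 1) * P) mod m)"
        unfolding hP w_def Unip_def using Cset_mult[OF s m2, of "nat (q - 1)" P 1] by simp
      also have "\<dots> = \<one>\<^bsub>Unip s m\<^esub>" unfolding e2 by (simp add: Unip_def cenx_zero[OF s m2])
      finally have wh: "w \<otimes>\<^bsub>Unip s m\<^esub> h = \<one>\<^bsub>Unip s m\<^esub>" .
      have "w = inv\<^bsub>Unip s m\<^esub> h" using monoid.inv_unique'[OF mon hc wc hw wh] .
      hence "inv\<^bsub>Unip s m\<^esub> h = cenx s m ((int (nat (q - 1)) * P) mod m)" unfolding w_def by simp
      thus ?case unfolding Cset_def by (intro CollectI exI[of _ "nat (q - 1)"]) simp
    next
      case (eng h1 h2) thus ?case using Cset_closed[OF s m2] by (simp add: Unip_def)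
    qed
  qed
  show "Cset s m P \<subseteq> generate (Unip s m) {cenx s m P}"
  proof
    fix x assume "x \<in> Cset s m P"
    then obtain c where x: "x = cenx s m ((int c * P) mod m)" unfolding Cset_def by blast
    have "cenx s m ((int c * P) mod m) \<in> generate (Unip s m) {cenx s m P}" for c
    proof (induction c)
      case 0 thus ?case using generate.one[of "Unip s m" "{cenx s m P}"] cenx_zero[OF s m2]
        by (simp add: Unip_def)
    next
      case (Suc c)
      have "cenx s m ((int (Suc c) * P) mod m) = cenx s m ((int c * P) mod m) \<otimes>\<^bsub>Unip s m\<^esub> cenx s m P"
        using Cset_mult[OF s m2, of c P 1] cP by (simp add: Unip_def)
      thus ?case using generate.eng[OF Suc generate.incl[of "cenx s m P" "{cenx s m P}" "Unip s m"]] by simp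
    qed
    thus "x \<in> generate (Unip s m) {cenx s m P}" using x by simp
  qed
qed

lemma (in monoid) coset_mult_central:
  assumes N: "N \<subseteq> carrier G" "\<one> \<in> N" and cl: "\<And>x y. x \<in> N \<Longrightarrow> y \<in> N \<Longrightarrow> x \<otimes> y \<in> N"
    and cm: "\<And>n g. n \<in> N \<Longrightarrow> g \<in> carrier G \<Longrightarrow> n \<otimes> g = g \<otimes> n"
    and x: "x \<in> carrier G" and y: "y \<in> carrier G"
  shows "(N #> x) <#> (N #> y) = N #> (x \<otimes> y)"
proof
  show "(N #> x) <#> (N #> y) \<subseteq> N #> (x \<otimes> y)"
  proof
    fix z assume "z \<in> (N #> x) <#> (N #> y)"
    then obtain n1 n2 where n: "n1 \<in> N" "n2 \<in> N" and z: "z = (n1 \<otimes> x) \<otimes> (n2 \<otimes> y)"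
      unfolding r_coset_def set_mult_def by blast
    have c: "n1 \<in> carrier G" "n2 \<in> carrier G" using n N by auto
    have "z = n1 \<otimes> (x \<otimes> n2) \<otimes> y" using z c x y by (simp add: m_assoc)
    also have "\<dots> = n1 \<otimes> (n2 \<otimes> x) \<otimes> y" using cm[OF n(2) x] by simp
    also have "\<dots> = (n1 \<otimes> n2) \<otimes> (x \<otimes> y)" using c x y by (simp add: m_assoc)
    finally show "z \<in> N #> (x \<otimes> y)" using cl[OF n] unfolding r_coset_def by blast
  qed
  show "N #> (x \<otimes> y) \<subseteq> (N #> x) <#> (N #> y)"
  proof
    fix z assume "z \<in> N #> (x \<otimes> y)"
    then obtain n where n: "n \<in> N" and z: "z = n \<otimes> (x \<otimes> y)" unfolding r_coset_def by blast
    have "z = (n \<otimes> x) \<otimes> (\<one> \<otimes> y)" using z n N x y by (auto simp: m_assoc)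
    thus "z \<in> (N #> x) <#> (N #> y)" using n N unfolding r_coset_def set_mult_def by blast
  qed
qed

lemma img_const: "S \<noteq> {} \<Longrightarrow> (\<And>x. x \<in> S \<Longrightarrow> f x = c) \<Longrightarrow> f ` S = {c}"
  by auto

lemma quot_hom:
  assumes U: "monoid U" and V: "monoid V" and N: "N \<subseteq> carrier U" "\<one>\<^bsub>U\<^esub> \<in> N"
    and psi: "\<psi> \<in> hom U V" and kill: "\<And>n. n \<in> N \<Longrightarrow> \<psi> n = \<one>\<^bsub>V\<^esub>"
  shows "(\<lambda>Z. the_elem (\<psi> ` Z)) \<in> hom (U Mod N) V"
    and "a \<in> carrier U \<Longrightarrow> the_elem (\<psi> ` (N #>\<^bsub>U\<^esub> a)) = \<psi> a"
proof -
  have self: "a \<in> N #>\<^bsub>U\<^esub> a" if a: "a \<in> carrier U" for a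
  proof -
    have "\<one>\<^bsub>U\<^esub> \<otimes>\<^bsub>U\<^esub> a \<in> N #>\<^bsub>U\<^esub> a" unfolding r_coset_def using N(2) by (rule UN_I) simp
    thus ?thesis using monoid.l_one[OF U a] by simp
  qed
  have elt: "\<exists>n\<in>N. x = n \<otimes>\<^bsub>U\<^esub> a" if "x \<in> N #>\<^bsub>U\<^esub> a" for x a
    using that unfolding r_coset_def by simp
  have psi1: "\<psi> x = \<psi> a" if a: "a \<in> carrier U" and x: "x \<in> N #>\<^bsub>U\<^esub> a" for x a
  proof -
    obtain n where n: "n \<in> N" and xn: "x = n \<otimes>\<^bsub>U\<^esub> a" using elt[OF x] by blast
    have nc: "n \<in> carrier U" using n N(1) by (rule subsetD[rotated])
    have "\<psi> (n \<otimes>\<^bsub>U\<^esub> a) = \<psi> n \<otimes>\<^bsub>V\<^esub> \<psi> a" using psi nc a by (simp add: hom_def)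
    also have "\<dots> = \<psi> a" using kill[OF n] monoid.l_one[OF V] hom_in_carrier[OF psi a] by simp
    finally show ?thesis using xn by simp
  qed
  have xc: "x \<in> carrier U" if a: "a \<in> carrier U" and x: "x \<in> N #>\<^bsub>U\<^esub> a" for x a
  proof -
    obtain n where n: "n \<in> N" and xn: "x = n \<otimes>\<^bsub>U\<^esub> a" using elt[OF x] by blast
    have nc: "n \<in> carrier U" using n N(1) by (rule subsetD[rotated])
    show ?thesis using xn monoid.m_closed[OF U nc a] by simp
  qed
  have im: "\<psi> ` (N #>\<^bsub>U\<^esub> a) = {\<psi> a}" if a: "a \<in> carrier U" for a
  proof (rule img_const)
    show "N #>\<^bsub>U\<^esub> a \<noteq> {}" using self[OF a] by blast
    show "\<psi> x = \<psi> a" if "x \<in> N #>\<^bsub>U\<^esub> a" for x using psi1[OF a that] .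
  qed
  show "a \<in> carrier U \<Longrightarrow> the_elem (\<psi> ` (N #>\<^bsub>U\<^esub> a)) = \<psi> a" using im by simp
  have prod: "\<psi> ` ((N #>\<^bsub>U\<^esub> a) <#>\<^bsub>U\<^esub> (N #>\<^bsub>U\<^esub> b)) = {\<psi> a \<otimes>\<^bsub>V\<^esub> \<psi> b}"
    if a: "a \<in> carrier U" and b: "b \<in> carrier U" for a b
  proof (rule img_const)
    have "a \<otimes>\<^bsub>U\<^esub> b \<in> (N #>\<^bsub>U\<^esub> a) <#>\<^bsub>U\<^esub> (N #>\<^bsub>U\<^esub> b)"
      unfolding set_mult_def using self[OF a] self[OF b] by blast
    thus "(N #>\<^bsub>U\<^esub> a) <#>\<^bsub>U\<^esub> (N #>\<^bsub>U\<^esub> b) \<noteq> {}" by blast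
    fix z assume "z \<in> (N #>\<^bsub>U\<^esub> a) <#>\<^bsub>U\<^esub> (N #>\<^bsub>U\<^esub> b)"
    then obtain x y where x: "x \<in> N #>\<^bsub>U\<^esub> a" and y: "y \<in> N #>\<^bsub>U\<^esub> b" and z: "z = x \<otimes>\<^bsub>U\<^esub> y"
      unfolding set_mult_def by blast
    have "\<psi> (x \<otimes>\<^bsub>U\<^esub> y) = \<psi> x \<otimes>\<^bsub>V\<^esub> \<psi> y" using psi xc[OF a x] xc[OF b y] by (simp add: hom_def)
    thus "\<psi> z = \<psi> a \<otimes>\<^bsub>V\<^esub> \<psi> b" using z psi1[OF a x] psi1[OF b y] by simp
  qed
  show "(\<lambda>Z. the_elem (\<psi> ` Z)) \<in> hom (U Mod N) V"
  proof (rule homI)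
    fix XX assume "XX \<in> carrier (U Mod N)"
    then obtain a where a: "a \<in> carrier U" and X: "XX = N #>\<^bsub>U\<^esub> a"
      unfolding FactGroup_def RCOSETS_def by auto
    show "the_elem (\<psi> ` XX) \<in> carrier V" using im[OF a] X hom_in_carrier[OF psi a] by simp
  next
    fix XX YY assume "XX \<in> carrier (U Mod N)" "YY \<in> carrier (U Mod N)"
    then obtain a b where a: "a \<in> carrier U" and X: "XX = N #>\<^bsub>U\<^esub> a"
      and b: "b \<in> carrier U" and Y: "YY = N #>\<^bsub>U\<^esub> b"
      unfolding FactGroup_def RCOSETS_def by auto
    show "the_elem (\<psi> ` (XX \<otimes>\<^bsub>U Mod N\<^esub> YY)) = the_elem (\<psi> ` XX) \<otimes>\<^bsub>V\<^esub> the_elem (\<psi> ` YY)"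
      using prod[OF a b] im[OF a] im[OF b] X Y by (simp add: FactGroup_def)
  qed
qed

section \<open>Reduction and corner maps\<close>

definition redm :: "int \<Rightarrow> (nat \<Rightarrow> nat \<Rightarrow> int) \<Rightarrow> nat \<Rightarrow> nat \<Rightarrow> int" where
  "redm P A i j = A i j mod P"

definition tlm :: "nat \<Rightarrow> (nat \<Rightarrow> nat \<Rightarrow> int) \<Rightarrow> nat \<Rightarrow> nat \<Rightarrow> int" where
  "tlm s A i j = (if i \<le> s \<and> j \<le> s then A i j else 0)"

definition brm :: "nat \<Rightarrow> (nat \<Rightarrow> nat \<Rightarrow> int) \<Rightarrow> nat \<Rightarrow> nat \<Rightarrow> int" where
  "brm s A i j = (if i \<in> {1..s} \<and> j \<in> {1..s} then A (i+1) (j+1) else 0)"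

lemma unitri_carrierI:
  assumes "\<And>i j. A i j \<noteq> 0 \<Longrightarrow> i \<in> {1..s+1} \<and> j \<in> {1..s+1}"
    and "\<And>i. i \<in> {1..s+1} \<Longrightarrow> A i i = 1 mod m"
    and "\<And>i j. j < i \<Longrightarrow> A i j = 0"
    and "\<And>i j. 0 \<le> A i j" and "\<And>i j. A i j < m"
  shows "A \<in> unitri_carrier s m"
  using assms unfolding unitri_carrier_def by auto

lemma redm_hom:
  assumes P: "2 \<le> P" and dv: "P dvd m" and m: "2 \<le> m"
  shows "redm P \<in> hom (Unip s m) (Unip s P)"
proof (rule homI)
  fix A assume "A \<in> carrier (Unip s m)"
  hence A: "A \<in> unitri_carrier s m" by (simp add: Unip_def)
  have "1 mod m mod P = 1 mod P" using dv by (simp add: mod_mod_cancel)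
  thus "redm P A \<in> carrier (Unip s P)"
    using unitri_carrierD[OF A] P by (auto simp: Unip_def unitri_carrier_def redm_def)
next
  fix A B assume "A \<in> carrier (Unip s m)" "B \<in> carrier (Unip s m)"
  show "redm P (A \<otimes>\<^bsub>Unip s m\<^esub> B) = redm P A \<otimes>\<^bsub>Unip s P\<^esub> redm P B"
  proof (simp add: Unip_def, intro ext)
    fix i j
    show "redm P (mat_mult s m A B) i j = mat_mult s P (redm P A) (redm P B) i j"
    proof (cases "i \<in> {1..s+1} \<and> j \<in> {1..s+1}")
      case True
      have "redm P (mat_mult s m A B) i j = (\<Sum>k\<in>{1..s+1}. A i k * B k j) mod P"
        using True dv by (simp add: redm_def mat_mult_in mod_mod_cancel)
      also have "\<dots> = (\<Sum>k\<in>{1..s+1}. (A i k mod P) * B k j) mod P"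
        by (rule mod_sum_mult_left[symmetric])
      also have "\<dots> = (\<Sum>k\<in>{1..s+1}. (A i k mod P) * (B k j mod P)) mod P"
        by (rule mod_sum_mult_right[symmetric])
      also have "\<dots> = mat_mult s P (redm P A) (redm P B) i j"
        using True by (simp add: redm_def mat_mult_in)
      finally show ?thesis .
    qed (simp add: redm_def mat_mult_out)
  qed
qed

lemma tlm_hom:
  assumes s: "1 \<le> s" and m: "2 \<le> m"
  shows "tlm s \<in> hom (Unip s m) (Unip (s-1) m)"
proof (rule homI)
  fix A assume "A \<in> carrier (Unip s m)"
  hence A: "A \<in> unitri_carrier s m" by (simp add: Unip_def)
  have ss: "s - 1 + 1 = s" using s by simp
  have "tlm s A \<in> unitri_carrier (s-1) m"
  proof (rule unitri_carrierI)
    fix i j assume "tlm s A i j \<noteq> 0"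
    thus "i \<in> {1..s-1+1} \<and> j \<in> {1..s-1+1}"
      using unitri_carrierD(1)[OF A, of i j] s by (auto simp: tlm_def split: if_splits)
  next
    fix i assume "i \<in> {1..s - 1 + 1}"
    thus "tlm s A i i = 1 mod m" using unitri_carrierD(2)[OF A, of i] s by (auto simp: tlm_def)
  next
    fix i j :: nat assume "j < i" thus "tlm s A i j = 0" using unitri_carrierD(3)[OF A, of j i] by (simp add: tlm_def)
  next
    fix i j show "0 \<le> tlm s A i j" "tlm s A i j < m"
      using unitri_carrierD(4,5)[OF A] m by (auto simp: tlm_def)
  qed
  thus "tlm s A \<in> carrier (Unip (s-1) m)" by (simp add: Unip_def)
next
  fix A B assume A': "A \<in> carrier (Unip s m)" and B': "B \<in> carrier (Unip s m)"
  have B: "B \<in> unitri_carrier s m" using B' by (simp add: Unip_def)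
  have "tlm s (mat_mult s m A B) = mat_mult (s-1) m (tlm s A) (tlm s B)"
  proof (intro ext)
    fix i j
    show "tlm s (mat_mult s m A B) i j = mat_mult (s-1) m (tlm s A) (tlm s B) i j"
    proof (cases "i \<in> {1..s} \<and> j \<in> {1..s}")
      case True
      have ss: "s - 1 + 1 = s" using s by simp
      have "B (s+1) j = 0" using unitri_carrierD(3)[OF B, of j "s+1"] True by simp
      hence "(\<Sum>k\<in>{1..s+1}. A i k * B k j) = (\<Sum>k\<in>{1..s}. A i k * B k j)"
        using s by (simp add: sum.cl_ivl_Suc)
      also have "\<dots> = (\<Sum>k\<in>{1..s}. tlm s A i k * tlm s B k j)"
        by (rule sum.cong) (use True in \<open>auto simp: tlm_def\<close>)
      finally have "tlm s (mat_mult s m A B) i j = (\<Sum>k\<in>{1..s}. tlm s A i k * tlm s B k j) mod m"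
        using True by (simp add: tlm_def mat_mult_in)
      also have "\<dots> = mat_mult (s-1) m (tlm s A) (tlm s B) i j"
        using True by (simp add: mat_mult_in ss)
      finally show ?thesis .
    next
      case False
      have ss: "s - 1 + 1 = s" using s by simp
      have "\<not> (i \<in> {1..s-1+1} \<and> j \<in> {1..s-1+1})" using False ss by simp
      hence r: "mat_mult (s-1) m (tlm s A) (tlm s B) i j = 0" by (rule mat_mult_out)
      have "tlm s (mat_mult s m A B) i j = 0"
        using False by (cases "i \<le> s \<and> j \<le> s") (auto simp: tlm_def mat_mult_def)
      thus ?thesis using r by simp
    qed
  qed
  thus "tlm s (A \<otimes>\<^bsub>Unip s m\<^esub> B) = tlm s A \<otimes>\<^bsub>Unip (s-1) m\<^esub> tlm s B" by (simp add: Unip_def)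
qed

lemma brm_hom:
  assumes s: "1 \<le> s" and m: "2 \<le> m"
  shows "brm s \<in> hom (Unip s m) (Unip (s-1) m)"
proof (rule homI)
  fix A assume "A \<in> carrier (Unip s m)"
  hence A: "A \<in> unitri_carrier s m" by (simp add: Unip_def)
  have ss: "s - 1 + 1 = s" using s by simp
  have "brm s A \<in> unitri_carrier (s-1) m"
  proof (rule unitri_carrierI)
    fix i j assume "brm s A i j \<noteq> 0"
    thus "i \<in> {1..s-1+1} \<and> j \<in> {1..s-1+1}"
      using s by (auto simp: brm_def split: if_splits)
  next
    fix i assume "i \<in> {1..s - 1 + 1}"
    thus "brm s A i i = 1 mod m" using unitri_carrierD(2)[OF A, of "i+1"] s by (auto simp: brm_def)
  next
    fix i j :: nat assume "j < i" thus "brm s A i j = 0" using unitri_carrierD(3)[OF A, of "j+1" "i+1"] by (simp add: brm_def)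
  next
    fix i j show "0 \<le> brm s A i j" "brm s A i j < m"
      using unitri_carrierD(4,5)[OF A] m by (auto simp: brm_def)
  qed
  thus "brm s A \<in> carrier (Unip (s-1) m)" by (simp add: Unip_def)
next
  fix A B assume A': "A \<in> carrier (Unip s m)" and B': "B \<in> carrier (Unip s m)"
  have A: "A \<in> unitri_carrier s m" using A' by (simp add: Unip_def)
  have "brm s (mat_mult s m A B) = mat_mult (s-1) m (brm s A) (brm s B)"
  proof (intro ext)
    fix i j
    have ss: "s - 1 + 1 = s" using s by simp
    show "brm s (mat_mult s m A B) i j = mat_mult (s-1) m (brm s A) (brm s B) i j"
    proof (cases "i \<in> {1..s} \<and> j \<in> {1..s}")
      case True
      have "A (i+1) 1 = 0" using unitri_carrierD(3)[OF A, of 1 "i+1"] True by simp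
      hence "(\<Sum>k\<in>{1..s+1}. A (i+1) k * B k (j+1)) = (\<Sum>k\<in>{Suc 1..Suc s}. A (i+1) k * B k (j+1))"
        by (subst sum.atLeast_Suc_atMost) simp_all
      also have "\<dots> = (\<Sum>k\<in>{1..s}. A (i+1) (k+1) * B (k+1) (j+1))"
        by (subst sum.shift_bounds_cl_Suc_ivl) simp
      also have "\<dots> = (\<Sum>k\<in>{1..s}. brm s A i k * brm s B k j)"
        by (rule sum.cong) (use True in \<open>auto simp: brm_def\<close>)
      finally have "brm s (mat_mult s m A B) i j = (\<Sum>k\<in>{1..s}. brm s A i k * brm s B k j) mod m"
        using True by (simp add: brm_def mat_mult_in)
      also have "\<dots> = mat_mult (s-1) m (brm s A) (brm s B) i j"
        using True by (simp add: mat_mult_in ss)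
      finally show ?thesis .
    next
      case False
      have "\<not> (i \<in> {1..s-1+1} \<and> j \<in> {1..s-1+1})" using False ss by simp
      hence r: "mat_mult (s-1) m (brm s A) (brm s B) i j = 0" by (rule mat_mult_out)
      have "brm s (mat_mult s m A B) i j = 0" unfolding brm_def using False by (rule if_not_P)
      thus ?thesis using r by simp
    qed
  qed
  thus "brm s (A \<otimes>\<^bsub>Unip s m\<^esub> B) = brm s A \<otimes>\<^bsub>Unip (s-1) m\<^esub> brm s B" by (simp add: Unip_def)
qed

lemma redm_cenx:
  assumes s: "1 \<le> s" and m: "2 \<le> m" and P: "2 \<le> P" and dv: "P dvd m"
  shows "redm P (cenx s m ((int c * P) mod m)) = mat_one s P"
proof (intro ext)
  fix i j
  have "(int c * P) mod m mod P = 0" using dv by (simp add: mod_mod_cancel)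
  thus "redm P (cenx s m ((int c * P) mod m)) i j = mat_one s P i j"
    using s m P by (auto simp: redm_def cenx_eq mat_one_eq)
qed

lemma tlm_cenx:
  assumes s: "1 \<le> s" and m: "2 \<le> m"
  shows "tlm s (cenx s m v) = mat_one (s-1) m"
  using s m by (auto simp: tlm_def cenx_eq mat_one_eq intro!: ext)

lemma brm_cenx:
  assumes s: "1 \<le> s" and m: "2 \<le> m"
  shows "brm s (cenx s m v) = mat_one (s-1) m"
  using s m by (auto simp: brm_def cenx_eq mat_one_eq intro!: ext)

lemma m_facts:
  fixes q P m :: int
  assumes q: "2 \<le> q" and P: "1 \<le> P" and m: "m = q * P"
  shows "2 \<le> m" "P < m"
proof -
  have "2 * 1 \<le> q * P" by (rule mult_mono) (use q P in auto)
  thus "2 \<le> m" using m by simp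
  have "1 * P < q * P" by (rule mult_strict_right_mono) (use q P in auto)
  thus "P < m" using m by simp
qed

lemma coset_Cset:
  assumes s: "1 \<le> s" and q: "2 \<le> q" and P: "1 \<le> P" and m: "m = q * P"
    and a: "a \<in> Cset s m P"
  shows "Cset s m P #>\<^bsub>Unip s m\<^esub> a = Cset s m P"
proof -
  have m2: "2 \<le> m" using m_facts[OF q P m] by simp
  obtain d where ad: "a = cenx s m ((int d * P) mod m)" using a unfolding Cset_def by blast
  show ?thesis
  proof
    show "Cset s m P #>\<^bsub>Unip s m\<^esub> a \<subseteq> Cset s m P"
      unfolding r_coset_def using Cset_closed[OF s m2 _ a] by (auto simp: Unip_def)
    show "Cset s m P \<subseteq> Cset s m P #>\<^bsub>Unip s m\<^esub> a"
    proof
      fix x assume "x \<in> Cset s m P"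
      then obtain e where xe: "x = cenx s m ((int e * P) mod m)" unfolding Cset_def by blast
      define c where "c = e + d * nat (q - 1)"
      have qn: "int (nat (q - 1)) = q - 1" using q by simp
      have "int (c + d) * P = int e * P + int d * m" using qn m q by (simp add: c_def algebra_simps)
      hence eq: "(int (c + d) * P) mod m = (int e * P) mod m" by simp
      have "mat_mult s m (cenx s m ((int c * P) mod m)) a = x"
        using Cset_mult[OF s m2, of c P d] ad xe eq by simp
      moreover have "cenx s m ((int c * P) mod m) \<in> Cset s m P" unfolding Cset_def by blast
      ultimately show "x \<in> Cset s m P #>\<^bsub>Unip s m\<^esub> a"
        unfolding r_coset_def by (auto simp: Unip_def)
    qed
  qed
qed

lemma triv_mat:
  assumes s: "1 \<le> s" and q: "2 \<le> q" and P: "1 \<le> P" and m: "m = q * P"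
    and A: "A \<in> unitri_carrier s m"
    and R: "P = 1 \<or> redm P A = mat_one s P"
    and TB: "s = 1 \<or> (tlm s A = mat_one (s-1) m \<and> brm s A = mat_one (s-1) m)"
  shows "A \<in> Cset s m P"
proof -
  have m2: "2 \<le> m" using m_facts[OF q P m] by simp
  define v where "v = A 1 (s+1)"
  have v0: "0 \<le> v" "v < m" using unitri_carrierD(4,5)[OF A] by (auto simp: v_def)
  obtain c :: nat where vc: "v = (int c * P) mod m"
  proof (cases "P = 1")
    case True
    show ?thesis by (rule that[of "nat v"]) (use True v0 in simp)
  next
    case False
    hence red: "redm P A = mat_one s P" and P2: "2 \<le> P" using R P by auto
    have "redm P A 1 (s+1) = mat_one s P 1 (s+1)" using red by simp
    hence "v mod P = 0" using P2 s by (simp add: redm_def mat_one_eq v_def)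
    hence vv: "v = (v div P) * P" by (metis minus_mod_eq_div_mult add.right_neutral diff_zero mult.commute)
    have "0 \<le> v div P" using v0 P by (simp add: pos_imp_zdiv_nonneg_iff)
    show ?thesis by (rule that[of "nat (v div P)"]) (use vv v0 \<open>0 \<le> v div P\<close> in simp)
  qed
  have "A = cenx s m v"
  proof (intro ext)
    fix i j
    show "A i j = cenx s m v i j"
    proof (cases "i \<in> {1..s+1} \<and> j \<in> {1..s+1}")
      case False
      thus ?thesis using unitri_carrierD(1)[OF A, of i j] s m2 by (auto simp: cenx_eq)
    next
      case True
      show ?thesis
      proof (cases "i = 1 \<and> j = s+1")
        case True thus ?thesis using s m2 by (simp add: cenx_eq v_def)
      next
        case ne: False
        have c: "cenx s m v i j = (if i = j then 1 else 0)" using ne True s m2 by (auto simp: cenx_eq)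
        consider "j < i" | "i = j" | "i < j" by linarith
        thus ?thesis
        proof cases
          case 1 thus ?thesis using c unitri_carrierD(3)[OF A, of j i] by simp
        next
          case 2 thus ?thesis using c unitri_carrierD(2)[OF A, of i] True m2 by simp
        next
          case 3
          have s2: "s \<noteq> 1" using 3 True ne by auto
          hence tl: "tlm s A = mat_one (s-1) m" and br: "brm s A = mat_one (s-1) m" using TB by auto
          show ?thesis
          proof (cases "j \<le> s")
            case True
            have "tlm s A i j = mat_one (s-1) m i j" using tl by simp
            thus ?thesis using c 3 True m2 by (simp add: tlm_def mat_one_eq)
          next
            case False
            hence j: "j = s+1" using \<open>i \<in> {1..s+1} \<and> j \<in> {1..s+1}\<close> by simp
            hence i2: "2 \<le> i" "i \<le> s" using ne 3 \<open>i \<in> {1..s+1} \<and> j \<in> {1..s+1}\<close> by auto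
            have "brm s A (i-1) s = mat_one (s-1) m (i-1) s" using br by simp
            moreover have "brm s A (i-1) s = A i j" using i2 j s by (auto simp: brm_def)
            moreover have "i - 1 \<noteq> s" using i2 by simp
            ultimately show ?thesis using c 3 m2 i2 by (simp add: mat_one_eq)
          qed
        qed
      qed
    qed
  qed
  thus ?thesis unfolding Cset_def using vc by blast
qed

section \<open>Embedding into the next quotient\<close>

definition iot :: "nat \<Rightarrow> (nat \<Rightarrow> nat \<Rightarrow> int) \<Rightarrow> nat \<Rightarrow> nat \<Rightarrow> int" where
  "iot s A i j = (if i \<le> s+1 \<and> j \<le> s+1 then A i j else if i = s+2 \<and> j = s+2 then 1 else 0)"

lemma iot_carrier:
  assumes m: "2 \<le> m" and A: "A \<in> unitri_carrier s m"
  shows "iot s A \<in> unitri_carrier (s+1) m"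
proof (rule unitri_carrierI)
  fix i j assume "iot s A i j \<noteq> 0"
  thus "i \<in> {1..s+1+1} \<and> j \<in> {1..s+1+1}"
    using unitri_carrierD(1)[OF A, of i j] by (auto simp: iot_def split: if_splits)
next
  fix i assume "i \<in> {1..s+1+1}"
  thus "iot s A i i = 1 mod m" using unitri_carrierD(2)[OF A, of i] m by (auto simp: iot_def)
next
  fix i j :: nat assume "j < i" thus "iot s A i j = 0" using unitri_carrierD(3)[OF A, of j i] by (simp add: iot_def)
next
  fix i j show "0 \<le> iot s A i j" "iot s A i j < m"
    using unitri_carrierD(4,5)[OF A] m by (auto simp: iot_def)
qed

lemma iot_mult:
  assumes m: "2 \<le> m" and A: "A \<in> unitri_carrier s m" and B: "B \<in> unitri_carrier s m"
  shows "iot s (mat_mult s m A B) = mat_mult (s+1) m (iot s A) (iot s B)"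
proof (intro ext)
  fix i j
  show "iot s (mat_mult s m A B) i j = mat_mult (s+1) m (iot s A) (iot s B) i j"
  proof (cases "i \<in> {1..s+1+1} \<and> j \<in> {1..s+1+1}")
    case True
    have split: "(\<Sum>k\<in>{1..s+1+1}. iot s A i k * iot s B k j)
        = (\<Sum>k\<in>{1..s+1}. iot s A i k * iot s B k j) + iot s A i (s+2) * iot s B (s+2) j"
      by (simp add: sum.cl_ivl_Suc)
    have R: "mat_mult (s+1) m (iot s A) (iot s B) i j = (\<Sum>k\<in>{1..s+1+1}. iot s A i k * iot s B k j) mod m"
      using True by (intro mat_mult_in) auto
    show ?thesis
    proof (cases "i \<le> s+1 \<and> j \<le> s+1")
      case a: True
      have "(\<Sum>k\<in>{1..s+1}. iot s A i k * iot s B k j) = (\<Sum>k\<in>{1..s+1}. A i k * B k j)"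
        by (rule sum.cong) (use a in \<open>auto simp: iot_def\<close>)
      moreover have "iot s A i (s+2) = 0" using a by (simp add: iot_def)
      moreover have "iot s (mat_mult s m A B) i j = (\<Sum>k\<in>{1..s+1}. A i k * B k j) mod m"
        using a True by (simp add: iot_def mat_mult_in)
      ultimately show ?thesis using R split by simp
    next
      case b: False
      have "(\<Sum>k\<in>{1..s+1}. iot s A i k * iot s B k j) = 0"
        by (rule sum.neutral) (use b True in \<open>auto simp: iot_def\<close>)
      moreover have "iot s A i (s+2) * iot s B (s+2) j = (if i = s+2 \<and> j = s+2 then 1 else 0)"
        using b True by (auto simp: iot_def)
      moreover have "iot s (mat_mult s m A B) i j = (if i = s+2 \<and> j = s+2 then 1 else 0)"
        using b unfolding iot_def by (intro if_not_P) simp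
      ultimately show ?thesis using R split m by simp
    qed
  next
    case False
    hence "mat_mult (s+1) m (iot s A) (iot s B) i j = 0" by (rule mat_mult_out)
    moreover have "iot s (mat_mult s m A B) i j = 0"
      using False by (auto simp: iot_def mat_mult_def)
    ultimately show ?thesis by simp
  qed
qed

lemma Cset_comm:
  assumes s: "1 \<le> s" and m: "2 \<le> m" and n: "n \<in> Cset s m P" and g: "g \<in> unitri_carrier s m"
  shows "mat_mult s m n g = mat_mult s m g n"
  using n cenx_mult_left[OF s m g] cenx_mult_right[OF s m g] unfolding Cset_def by auto

lemma embed_part:
  fixes s :: nat and q P m :: int
  assumes s: "1 \<le> s" and q: "2 \<le> q" and P: "1 \<le> P" and m: "m = q * P"
  defines "f \<equiv> \<lambda>A. Cset (s+1) m P #>\<^bsub>Unip (s+1) m\<^esub> iot s A"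
  shows "f \<in> hom (Unip s m) (Unip (s+1) m Mod Cset (s+1) m P)"
    and "\<And>A. A \<in> carrier (Unip s m) \<Longrightarrow> f A = \<one>\<^bsub>Unip (s+1) m Mod Cset (s+1) m P\<^esub> \<Longrightarrow> A = \<one>\<^bsub>Unip s m\<^esub>"
proof -
  have m2: "2 \<le> m" using m_facts[OF q P m] by simp
  have s1: "1 \<le> s+1" by simp
  have mon: "monoid (Unip (s+1) m)" using m2 by (rule Unip_monoid)
  have cm: "(Cset (s+1) m P #>\<^bsub>Unip (s+1) m\<^esub> x) <#>\<^bsub>Unip (s+1) m\<^esub> (Cset (s+1) m P #>\<^bsub>Unip (s+1) m\<^esub> y)
      = Cset (s+1) m P #>\<^bsub>Unip (s+1) m\<^esub> (x \<otimes>\<^bsub>Unip (s+1) m\<^esub> y)"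
    if x: "x \<in> carrier (Unip (s+1) m)" and y: "y \<in> carrier (Unip (s+1) m)" for x y
  proof (rule monoid.coset_mult_central[OF mon _ _ _ _ x y])
    show "Cset (s+1) m P \<subseteq> carrier (Unip (s+1) m)" using Cset_carrier[OF s1 m2] by (simp add: Unip_def)
    show "\<one>\<^bsub>Unip (s+1) m\<^esub> \<in> Cset (s+1) m P" using Cset_one[OF s1 m2] by (simp add: Unip_def)
    show "\<And>x y. x \<in> Cset (s+1) m P \<Longrightarrow> y \<in> Cset (s+1) m P \<Longrightarrow> x \<otimes>\<^bsub>Unip (s+1) m\<^esub> y \<in> Cset (s+1) m P"
      using Cset_closed[OF s1 m2] by (simp add: Unip_def)
    show "\<And>n g. n \<in> Cset (s+1) m P \<Longrightarrow> g \<in> carrier (Unip (s+1) m) \<Longrightarrow> n \<otimes>\<^bsub>Unip (s+1) m\<^esub> g = g \<otimes>\<^bsub>Unip (s+1) m\<^esub> n"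
      using Cset_comm[OF s1 m2] by (simp add: Unip_def)
  qed
  show "f \<in> hom (Unip s m) (Unip (s+1) m Mod Cset (s+1) m P)"
  proof (rule homI)
    fix A assume "A \<in> carrier (Unip s m)"
    hence "iot s A \<in> carrier (Unip (s+1) m)" using iot_carrier[OF m2] by (simp add: Unip_def)
    thus "f A \<in> carrier (Unip (s+1) m Mod Cset (s+1) m P)"
      unfolding f_def FactGroup_def RCOSETS_def by auto
  next
    fix A B assume A: "A \<in> carrier (Unip s m)" and B: "B \<in> carrier (Unip s m)"
    have iA: "iot s A \<in> carrier (Unip (s+1) m)" and iB: "iot s B \<in> carrier (Unip (s+1) m)"
      using iot_carrier[OF m2] A B by (auto simp: Unip_def)
    have "iot s (A \<otimes>\<^bsub>Unip s m\<^esub> B) = iot s A \<otimes>\<^bsub>Unip (s+1) m\<^esub> iot s B"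
      using iot_mult[OF m2] A B by (simp add: Unip_def)
    thus "f (A \<otimes>\<^bsub>Unip s m\<^esub> B) = f A \<otimes>\<^bsub>Unip (s+1) m Mod Cset (s+1) m P\<^esub> f B"
      unfolding f_def using cm[OF iA iB] by (simp add: FactGroup_def)
  qed
  fix A assume A': "A \<in> carrier (Unip s m)" and fA: "f A = \<one>\<^bsub>Unip (s+1) m Mod Cset (s+1) m P\<^esub>"
  have A: "A \<in> unitri_carrier s m" using A' by (simp add: Unip_def)
  have iA: "iot s A \<in> unitri_carrier (s+1) m" using iot_carrier[OF m2 A] .
  have "mat_mult (s+1) m (mat_one (s+1) m) (iot s A) \<in> Cset (s+1) m P #>\<^bsub>Unip (s+1) m\<^esub> iot s A"
    unfolding r_coset_def using Cset_one[OF s1 m2] by (auto simp: Unip_def)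
  hence "iot s A \<in> Cset (s+1) m P" using fA mat_mult_one_left[OF m2 iA]
    by (simp add: f_def FactGroup_def)
  then obtain c where ic: "iot s A = cenx (s+1) m ((int c * P) mod m)" unfolding Cset_def by blast
  have "iot s A 1 (s+2) = cenx (s+1) m ((int c * P) mod m) 1 (s+2)" using ic by simp
  hence "(int c * P) mod m = 0" by (simp add: iot_def cenx_def mat_one_def)
  hence io: "iot s A = mat_one (s+1) m" using ic cenx_zero[OF s1 m2] by simp
  show "A = \<one>\<^bsub>Unip s m\<^esub>"
  proof -
    have "A i j = mat_one s m i j" for i j
    proof (cases "i \<le> s+1 \<and> j \<le> s+1")
      case True
      have "iot s A i j = mat_one (s+1) m i j" using io by simp
      thus ?thesis using True by (simp add: iot_def mat_one_def)
    next
      case False thus ?thesis using unitri_carrierD(1)[OF A, of i j] by (auto simp: mat_one_def)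
    qed
    thus ?thesis by (auto simp: Unip_def)
  qed
qed

section \<open>Maps out of the quotient\<close>

lemma ubar_part:
  fixes s :: nat and q P m :: int
  assumes s: "1 \<le> s" and q: "2 \<le> q" and P: "1 \<le> P" and m: "m = q * P"
  shows "2 \<le> P \<Longrightarrow> (\<lambda>Z. the_elem (redm P ` Z)) \<in> hom (Unip s m Mod Cset s m P) (Unip s P)"
    and "(\<lambda>Z. the_elem (tlm s ` Z)) \<in> hom (Unip s m Mod Cset s m P) (Unip (s-1) m)"
    and "(\<lambda>Z. the_elem (brm s ` Z)) \<in> hom (Unip s m Mod Cset s m P) (Unip (s-1) m)"
    and "\<And>Zc. Zc \<in> carrier (Unip s m Mod Cset s m P) \<Longrightarrow>
          (P = 1 \<or> the_elem (redm P ` Zc) = \<one>\<^bsub>Unip s P\<^esub>) \<Longrightarrow>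
          (s = 1 \<or> (the_elem (tlm s ` Zc) = \<one>\<^bsub>Unip (s-1) m\<^esub> \<and> the_elem (brm s ` Zc) = \<one>\<^bsub>Unip (s-1) m\<^esub>)) \<Longrightarrow>
          Zc = \<one>\<^bsub>Unip s m Mod Cset s m P\<^esub>"
proof -
  have m2: "2 \<le> m" using m_facts[OF q P m] by simp
  have dv: "P dvd m" using m by simp
  have mon: "monoid (Unip s m)" using m2 by (rule Unip_monoid)
  have Nc: "Cset s m P \<subseteq> carrier (Unip s m)" using Cset_carrier[OF s m2] by (simp add: Unip_def)
  have N1: "\<one>\<^bsub>Unip s m\<^esub> \<in> Cset s m P" using Cset_one[OF s m2] by (simp add: Unip_def)
  have kr: "redm P n = \<one>\<^bsub>Unip s P\<^esub>" if "n \<in> Cset s m P" "2 \<le> P" for n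
    using that redm_cenx[OF s m2 _ dv] unfolding Cset_def by (auto simp: Unip_def)
  have kt: "tlm s n = \<one>\<^bsub>Unip (s-1) m\<^esub>" if "n \<in> Cset s m P" for n
    using that tlm_cenx[OF s m2] unfolding Cset_def by (auto simp: Unip_def)
  have kb: "brm s n = \<one>\<^bsub>Unip (s-1) m\<^esub>" if "n \<in> Cset s m P" for n
    using that brm_cenx[OF s m2] unfolding Cset_def by (auto simp: Unip_def)
  have hr: "redm P \<in> hom (Unip s m) (Unip s P)" if "2 \<le> P" using redm_hom[OF that dv m2] .
  have ht: "tlm s \<in> hom (Unip s m) (Unip (s-1) m)" using tlm_hom[OF s m2] .
  have hb: "brm s \<in> hom (Unip s m) (Unip (s-1) m)" using brm_hom[OF s m2] .
  show "2 \<le> P \<Longrightarrow> (\<lambda>Z. the_elem (redm P ` Z)) \<in> hom (Unip s m Mod Cset s m P) (Unip s P)"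
    using quot_hom(1)[OF mon Unip_monoid Nc N1 hr kr] by blast
  show "(\<lambda>Z. the_elem (tlm s ` Z)) \<in> hom (Unip s m Mod Cset s m P) (Unip (s-1) m)"
    using quot_hom(1)[OF mon Unip_monoid[OF m2] Nc N1 ht kt] by blast
  show "(\<lambda>Z. the_elem (brm s ` Z)) \<in> hom (Unip s m Mod Cset s m P) (Unip (s-1) m)"
    using quot_hom(1)[OF mon Unip_monoid[OF m2] Nc N1 hb kb] by blast
  fix Zc assume X: "Zc \<in> carrier (Unip s m Mod Cset s m P)"
    and R: "P = 1 \<or> the_elem (redm P ` Zc) = \<one>\<^bsub>Unip s P\<^esub>"
    and TB: "s = 1 \<or> (the_elem (tlm s ` Zc) = \<one>\<^bsub>Unip (s-1) m\<^esub> \<and> the_elem (brm s ` Zc) = \<one>\<^bsub>Unip (s-1) m\<^esub>)"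
  obtain a where a: "a \<in> carrier (Unip s m)" and Xa: "Zc = Cset s m P #>\<^bsub>Unip s m\<^esub> a"
    using X unfolding FactGroup_def RCOSETS_def by auto
  have R': "P = 1 \<or> redm P a = mat_one s P"
  proof (cases "P = 1")
    case False
    hence P2: "2 \<le> P" using P by simp
    have "the_elem (redm P ` Zc) = redm P a"
      using quot_hom(2)[OF mon Unip_monoid Nc N1 hr[OF P2] kr a] P2 Xa by simp
    thus ?thesis using R by (simp add: Unip_def)
  qed simp
  have TB': "s = 1 \<or> (tlm s a = mat_one (s-1) m \<and> brm s a = mat_one (s-1) m)"
  proof -
    have "the_elem (tlm s ` Zc) = tlm s a" using quot_hom(2)[OF mon Unip_monoid[OF m2] Nc N1 ht kt a] Xa by simp
    moreover have "the_elem (brm s ` Zc) = brm s a" using quot_hom(2)[OF mon Unip_monoid[OF m2] Nc N1 hb kb a] Xa by simp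
    ultimately show ?thesis using TB by (simp add: Unip_def)
  qed
  have "a \<in> Cset s m P" using triv_mat[OF s q P m _ R' TB'] a by (simp add: Unip_def)
  hence "Zc = Cset s m P" using coset_Cset[OF s q P m] Xa by simp
  thus "Zc = \<one>\<^bsub>Unip s m Mod Cset s m P\<^esub>" by (simp add: FactGroup_def)
qed

lemma Ubar_eq:
  assumes p: "2 \<le> p" and s: "1 \<le> s" "s \<le> n"
  shows "Ubar p n s = Unip s (int p ^ (n-s+1)) Mod Cset s (int p ^ (n-s+1)) (int p ^ (n-s))"
proof -
  have m: "int p ^ (n-s+1) = int p * int p ^ (n-s)" by simp
  have c: "central_elt p n s = cenx s (int p ^ (n-s+1)) (int p ^ (n-s))"
    by (simp add: central_elt_def cenx_def)
  have q: "2 \<le> int p" using p by simp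
  have P: "1 \<le> int p ^ (n-s)" using p by simp
  show ?thesis unfolding Ubar_def Ukp_def c generate_Cset[OF s(1) q P m] ..
qed

theorem proposition10p1:
  fixes p n :: nat and G :: "('a, 'b) monoid_scheme" and T :: "'a topology"
  assumes "Factorial_Ring.prime p" and "n \<ge> 2" and "profinite_group G T"
  shows "(\<Inter>s\<in>{1..n}. T_of (Ubar p n s) G T) = (\<Inter>s\<in>{1..n-1}. T_of (Ukp p (n-1) s) G T)"
proof
  have p2: "2 \<le> p" using assms(1) by (simp add: prime_ge_2_nat)
  have q: "2 \<le> int p" using p2 by simp
  show "(\<Inter>s\<in>{1..n}. T_of (Ubar p n s) G T) \<subseteq> (\<Inter>s\<in>{1..n-1}. T_of (Ukp p (n-1) s) G T)"
  proof
    fix x assume x: "x \<in> (\<Inter>s\<in>{1..n}. T_of (Ubar p n s) G T)"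
    have xG: "x \<in> carrier G" using x T_of_sub assms(2) by fastforce
    show "x \<in> (\<Inter>s\<in>{1..n-1}. T_of (Ukp p (n-1) s) G T)"
    proof
      fix s assume s: "s \<in> {1..n-1}"
      define m where "m = int p ^ (n-s)"
      define P where "P = int p ^ (n-s-1)"
      have s1: "1 \<le> s" using s by simp
      have P1: "1 \<le> P" using p2 by (simp add: P_def)
      have nsuc: "n - s = Suc (n-s-1)" using s by auto
      have m: "m = int p * P" unfolding m_def P_def by (subst nsuc) simp
      have U: "Ukp p (n-1) s = Unip s m"
      proof -
        have "n - 1 - s + 1 = n - s" using s by auto
        thus ?thesis by (simp only: Ukp_def m_def)
      qed
      have e1: "n - (s+1) + 1 = n - s" "n - (s+1) = n - s - 1" using s by auto
      have B0: "Ubar p n (s+1) = Unip (s+1) (int p ^ (n-(s+1)+1)) Mod Cset (s+1) (int p ^ (n-(s+1)+1)) (int p ^ (n-(s+1)))"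
        by (rule Ubar_eq[OF p2]) (use s in auto)
      have B: "Ubar p n (s+1) = Unip (s+1) m Mod Cset (s+1) m P"
        using B0 unfolding e1(1) unfolding e1(2) m_def P_def .
      define f where "f = (\<lambda>A. Cset (s+1) m P #>\<^bsub>Unip (s+1) m\<^esub> iot s A)"
      have "carrier G \<inter> (\<Inter>(V, g)\<in>{(Ubar p n (s+1), f)}. T_of V G T) \<subseteq> T_of (Unip s m) G T"
      proof (rule T_of_joint)
        fix V g assume "(V, g) \<in> {(Ubar p n (s+1), f)}"
        thus "g \<in> hom (Unip s m) V" using embed_part(1)[OF s1 q P1 m] B by (simp add: f_def)
      next
        fix a assume a: "a \<in> carrier (Unip s m)"
          and h: "\<And>V g. (V, g) \<in> {(Ubar p n (s+1), f)} \<Longrightarrow> g a = \<one>\<^bsub>V\<^esub>"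
        have "f a = \<one>\<^bsub>Unip (s+1) m Mod Cset (s+1) m P\<^esub>" using h[of "Ubar p n (s+1)" f] B by simp
        thus "a = \<one>\<^bsub>Unip s m\<^esub>" using embed_part(2)[OF s1 q P1 m a] by (simp add: f_def)
      qed
      moreover have "x \<in> T_of (Ubar p n (s+1)) G T" using x s by auto
      ultimately show "x \<in> T_of (Ukp p (n-1) s) G T" using xG U by auto
    qed
  qed
  show "(\<Inter>s\<in>{1..n-1}. T_of (Ukp p (n-1) s) G T) \<subseteq> (\<Inter>s\<in>{1..n}. T_of (Ubar p n s) G T)"
  proof
    fix x assume x: "x \<in> (\<Inter>s\<in>{1..n-1}. T_of (Ukp p (n-1) s) G T)"
    have xG: "x \<in> carrier G" using x T_of_sub assms(2) by fastforce
    show "x \<in> (\<Inter>s\<in>{1..n}. T_of (Ubar p n s) G T)"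
    proof
      fix s assume s: "s \<in> {1..n}"
      define m where "m = int p ^ (n-s+1)"
      define P where "P = int p ^ (n-s)"
      have s1: "1 \<le> s" using s by simp
      have P1: "1 \<le> P" using p2 by (simp add: P_def)
      have m: "m = int p * P" unfolding m_def P_def by simp
      have B: "Ubar p n s = Unip s m Mod Cset s m P"
        using Ubar_eq[OF p2, of s n] s unfolding m_def P_def by simp
      define F where "F = (if s \<le> n - 1 then {(Ukp p (n-1) s, (\<lambda>Z. the_elem (redm P ` Z)))} else {})
          \<union> (if 2 \<le> s then {(Ukp p (n-1) (s-1), (\<lambda>Z. the_elem (tlm s ` Z))),
                             (Ukp p (n-1) (s-1), (\<lambda>Z. the_elem (brm s ` Z)))} else {})"
      have U1: "Ukp p (n-1) s = Unip s P" if sn: "s \<le> n - 1"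
      proof -
        have "n - 1 - s + 1 = n - s" using sn s by auto
        thus ?thesis by (simp only: Ukp_def P_def)
      qed
      have e2: "n - 1 - (s - 1) + 1 = n - s + 1" using s by auto
      have U2: "Ukp p (n-1) (s-1) = Unip (s-1) m"
        using e2 by (simp only: Ukp_def m_def)
      have P2: "s \<le> n - 1 \<Longrightarrow> 2 \<le> P"
      proof -
        assume "s \<le> n - 1"
        hence "n - s = Suc (n - s - 1)" using s by auto
        hence "P = int p * int p ^ (n - s - 1)" unfolding P_def by (metis power_Suc)
        moreover have "1 \<le> int p ^ (n - s - 1)" using p2 by simp
        ultimately have "2 * 1 \<le> P" using q by (metis mult_mono zero_le_one order_trans one_le_numeral)
        thus "2 \<le> P" by simp
      qed
      have Pn: "\<not> s \<le> n - 1 \<Longrightarrow> P = 1" using s by (simp add: P_def)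
      have "carrier G \<inter> (\<Inter>(V, g)\<in>F. T_of V G T) \<subseteq> T_of (Unip s m Mod Cset s m P) G T"
      proof (rule T_of_joint)
        fix V g assume "(V, g) \<in> F"
        thus "g \<in> hom (Unip s m Mod Cset s m P) V"
          using ubar_part(1)[OF s1 q P1 m] ubar_part(2,3)[OF s1 q P1 m] U1 U2 P2
          by (auto simp: F_def split: if_splits)
      next
        fix a assume a: "a \<in> carrier (Unip s m Mod Cset s m P)"
          and h: "\<And>V g. (V, g) \<in> F \<Longrightarrow> g a = \<one>\<^bsub>V\<^esub>"
        have R: "P = 1 \<or> the_elem (redm P ` a) = \<one>\<^bsub>Unip s P\<^esub>"
        proof (cases "s \<le> n - 1")
          case True
          have "(Ukp p (n-1) s, (\<lambda>Z. the_elem (redm P ` Z))) \<in> F" using True by (simp add: F_def)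
          from h[OF this] show ?thesis using U1[OF True] by simp
        qed (use Pn in simp)
        have TB: "s = 1 \<or> (the_elem (tlm s ` a) = \<one>\<^bsub>Unip (s-1) m\<^esub> \<and> the_elem (brm s ` a) = \<one>\<^bsub>Unip (s-1) m\<^esub>)"
        proof (cases "2 \<le> s")
          case True
          have "(Ukp p (n-1) (s-1), (\<lambda>Z. the_elem (tlm s ` Z))) \<in> F"
               "(Ukp p (n-1) (s-1), (\<lambda>Z. the_elem (brm s ` Z))) \<in> F" using True by (auto simp: F_def)
          from h[OF this(1)] h[OF this(2)] show ?thesis using U2 by simp
        qed (use s in simp)
        show "a = \<one>\<^bsub>Unip s m Mod Cset s m P\<^esub>" using ubar_part(4)[OF s1 q P1 m a R TB] .
      qed
      moreover have "x \<in> (\<Inter>(V, g)\<in>F. T_of V G T)"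
      proof -
        have "x \<in> T_of V G T" if "(V, g) \<in> F" for V g
        proof -
          have "(V = Ukp p (n-1) s \<and> s \<in> {1..n-1}) \<or> (V = Ukp p (n-1) (s-1) \<and> s - 1 \<in> {1..n-1})"
            using that s by (auto simp: F_def split: if_splits)
          thus ?thesis using x by auto
        qed
        thus ?thesis by auto
      qed
      ultimately show "x \<in> T_of (Ubar p n s) G T" using xG B by auto
    qed
  qed
qed

end
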